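(* Let $\Lambda$ be a lattice and let $B\subset\Lambda$ be a finite subset. Let $B=B_1\cup B_2$ be an integral decomposition of $B$, and let $D\subseteq B$ be an irreducible subset. Then $D\subseteq B_1$ or $D\subseteq B_2$.
   Context: A lattice is a free abelian group of finite rank. For a subset $A\subseteq\Lambda$, $\langle A\rangle_{\mathbb Z}$ denotes the subgroup generated by $A$ and $\langle A\rangle_{\mathbb C}$ the complex subspace of $\Lambda\otimes_{\mathbb Z}\mathbb C$ it spans. The completion of a subgroup $\Delta\subseteq\Lambda$ is $\overline{\Delta}=\langle\Delta\rangle_{\mathbb C}\cap\Lambda$. An integral decomposition of a finite set $B\subset\Lambda$ is a partition $B=\bigcup_i B_i$ such that $\overline{\langle B\rangle_{\mathbb Z}}=\bigoplus_i\overline{\langle B_i\rangle_{\mathbb Z}}$ (internal direct sum). $B$ is irreducible if it has no nontrivial integral decomposition. *)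

theory Defs
  imports "HOL-Analysis.Analysis"
begin

text \<open>A lattice of rank n is modelled as int ^ 'n (free abelian group Z^n);
  its complexification is complex ^ 'n.\<close>

definition lat_to_C :: "int ^ 'n \<Rightarrow> complex ^ 'n" where
  "lat_to_C v = (\<chi> i. of_int (v $ i))"

definition zspan :: "(int ^ 'n) set \<Rightarrow> (int ^ 'n) set" where
  "zspan A = module.span ((*s) :: int \<Rightarrow> int ^ 'n \<Rightarrow> int ^ 'n) A"

definition cspan :: "(int ^ 'n) set \<Rightarrow> (complex ^ 'n) set" where
  "cspan A = module.span ((*s) :: complex \<Rightarrow> complex ^ 'n \<Rightarrow> complex ^ 'n) (lat_to_C ` A)"

definition completion :: "(int ^ 'n) set \<Rightarrow> (int ^ 'n) set" where
  "completion \<Delta> = {v. lat_to_C v \<in> cspan \<Delta>}"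

definition internal_direct_sum :: "(int ^ 'n) set \<Rightarrow> 'i set \<Rightarrow> ('i \<Rightarrow> (int ^ 'n) set) \<Rightarrow> bool" where
  "internal_direct_sum L P G \<longleftrightarrow>
     (\<forall>f. (\<forall>p\<in>P. f p \<in> G p) \<longrightarrow> (\<Sum>p\<in>P. f p) \<in> L) \<and>
     (\<forall>x\<in>L. \<exists>!f. (\<forall>p\<in>P. f p \<in> G p) \<and> (\<forall>p. p \<notin> P \<longrightarrow> f p = 0) \<and> x = (\<Sum>p\<in>P. f p))"

definition is_partition :: "'a set \<Rightarrow> 'a set set \<Rightarrow> bool" where
  "is_partition B P \<longleftrightarrow> \<Union>P = B \<and> {} \<notin> P \<and> (\<forall>p\<in>P. \<forall>q\<in>P. p \<noteq> q \<longrightarrow> p \<inter> q = {})"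

definition integral_decomposition :: "(int ^ 'n) set \<Rightarrow> (int ^ 'n) set set \<Rightarrow> bool" where
  "integral_decomposition B P \<longleftrightarrow> is_partition B P \<and>
     internal_direct_sum (completion (zspan B)) P (\<lambda>p. completion (zspan p))"

definition irreducible_set :: "(int ^ 'n) set \<Rightarrow> bool" where
  "irreducible_set B \<longleftrightarrow> \<not> (\<exists>P. integral_decomposition B P \<and> card P \<ge> 2)"

end

theory Submission imports Defs begin

lemma hamel: "\<exists>g::complex \<Rightarrow> rat. (\<forall>a b. g (a+b) = g a + g b) \<and> (\<forall>q z. g (of_rat q * z) = q * g z) \<and> g 1 = 1"
proof -
  interpret p: vector_space_pair "\<lambda>(q::rat) (z::complex). of_rat q * z" "(*) :: rat\<Rightarrow>rat\<Rightarrow>rat"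
    by unfold_locales (auto simp: algebra_simps of_rat_add of_rat_mult)
  have "p.vs1.independent {1}"
    by (rule p.vs1.independent_insertI) (auto simp: p.vs1.span_empty p.vs1.independent_empty)
  from p.linear_independent_extend[OF this, of "\<lambda>_. 1"] obtain g where
    g: "Vector_Spaces.linear (\<lambda>(q::rat) (z::complex). of_rat q * z) (*) g" "g 1 = 1" by auto
  then have "module_hom (\<lambda>(q::rat) (z::complex). of_rat q * z) (*) g"
    using module_hom_iff_linear by blast
  then have "\<forall>a b. g (a+b) = g a + g b" "\<forall>q z. g (of_rat q * z) = q * g z"
    by (auto dest: module_hom.add module_hom.scale)
  then show ?thesis using g(2) by blast
qed

lemma int_module: "module ((*s) :: int \<Rightarrow> int ^ 'n \<Rightarrow> int ^ 'n)"
  by unfold_locales (vector algebra_simps)+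

lemma lat_add: "lat_to_C (a+b) = lat_to_C a + lat_to_C b"
  by (simp add: lat_to_C_def vec_eq_iff)
lemma lat_smult: "lat_to_C (k *s a) = of_int k *s lat_to_C a"
  by (simp add: lat_to_C_def vec_eq_iff)
lemma lat_inj: "inj lat_to_C"
  by (auto simp: inj_def lat_to_C_def vec_eq_iff)
lemma lat_sum: "lat_to_C (sum f t) = (\<Sum>a\<in>t. lat_to_C (f a))"
  by (induction t rule: infinite_finite_induct) (auto simp: lat_add lat_to_C_def vec_eq_iff)

lemma cspan_eq: "cspan S = vec.span (lat_to_C ` S)"
  by (simp add: cspan_def)

lemma denom: "finite t \<Longrightarrow> \<exists>N::int. N > 0 \<and> (\<forall>a\<in>t. of_int N * (h a :: rat) \<in> \<int>)"
proof (induction t rule: finite_induct)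
  case empty show ?case by (intro exI[of _ 1]) auto
next
  case (insert x F)
  then obtain N where N: "N > 0" "\<forall>a\<in>F. of_int N * h a \<in> \<int>" by blast
  obtain p q where pq: "quotient_of (h x) = (p, q)" by (cases "quotient_of (h x)")
  have q: "q > 0" "h x = of_int p / of_int q" using pq quotient_of_denom_pos quotient_of_div by blast+
  have "\<forall>a\<in>insert x F. of_int (N*q) * h a \<in> \<int>"
  proof
    fix a assume "a \<in> insert x F"
    then show "of_int (N*q) * h a \<in> \<int>"
    proof
      assume "a = x" then show ?thesis using q by (simp add: field_simps)
    next
      assume "a \<in> F"
      then have "of_int q * (of_int N * h a) \<in> \<int>" using N by (simp add: Ints_mult)
      then show ?thesis by (simp add: mult_ac)
    qed
  qed
  then show ?case using N q by (intro exI[of _ "N*q"]) simp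
qed

lemma gsum: "(\<forall>a b. g (a+b) = g a + g b) \<Longrightarrow> g (sum f t) = (\<Sum>a\<in>t. g (f a))" for g :: "complex \<Rightarrow> rat"
proof -
  assume a: "\<forall>a b. g (a+b) = g a + g b"
  then have g0: "g 0 = 0" by (metis add_cancel_right_right add_0)
  show ?thesis by (induction t rule: infinite_finite_induct) (auto simp: g0 a)
qed

lemma R:
  fixes T :: "(int^'n) set"
  assumes "lat_to_C x \<in> cspan (zspan T)"
  shows "\<exists>N::int. N > 0 \<and> N *s x \<in> zspan T"
proof -
  interpret Z: module "(*s) :: int \<Rightarrow> int^'n \<Rightarrow> int^'n" by (rule int_module)
  let ?S = "zspan T"
  from assms obtain t r where t: "finite t" "t \<subseteq> lat_to_C ` ?S" and x: "lat_to_C x = (\<Sum>a\<in>t. r a *s a)"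
    unfolding cspan_def vec.span_explicit by blast
  obtain g :: "complex \<Rightarrow> rat" where g: "\<forall>a b. g (a+b) = g a + g b" "\<forall>q z. g (of_rat q * z) = q * g z" "g 1 = 1"
    using hamel by blast
  define pre where "pre a = inv_into ?S lat_to_C a" for a
  have pre: "lat_to_C (pre a) = a" "pre a \<in> ?S" if "a \<in> t" for a
    using t that by (auto simp: pre_def f_inv_into_f inv_into_into)
  obtain N where N: "N>0" "\<forall>a\<in>t. of_int N * g (r a) \<in> \<int>" using denom[OF t(1), of "\<lambda>a. g (r a)"] by blast
  define m where "m a = \<lfloor>of_int N * g (r a)\<rfloor>" for a
  have m: "of_int (m a) = of_int N * g (r a)" if "a\<in>t" for a
    using N that unfolding m_def by (metis Ints_cases floor_of_int)
  have gint: "g (of_int k * z) = of_int k * g z" for k z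
    using g(2)[rule_format, of "of_int k" z] by simp
  have g1: "g (of_int k) = of_int k" for k using gint[of k 1] g(3) by simp
  have "N *s x = (\<Sum>a\<in>t. m a *s pre a)"
    unfolding vec_eq_iff
  proof
    fix i
    have "(\<Sum>a\<in>t. r a *s a) $ i = (\<Sum>a\<in>t. r a * of_int (pre a $ i))"
    proof -
      have "a $ i = of_int (pre a $ i)" if "a\<in>t" for a
        using pre(1)[OF that] by (metis lat_to_C_def vec_lambda_beta)
      then show ?thesis by simp
    qed
    then have "of_int (x$i) = (\<Sum>a\<in>t. r a * of_int (pre a $ i))"
      using x by (metis lat_to_C_def vec_lambda_beta)
    then have "g (of_int (x$i)) = g (\<Sum>a\<in>t. of_int (pre a $ i) * r a)" by (simp add: mult_ac)
    then have "of_int (x$i) = (\<Sum>a\<in>t. of_int (pre a $ i) * g (r a))"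
      by (simp add: g1 gsum[OF g(1)] gint)
    then have "of_int N * of_int (x$i) = (\<Sum>a\<in>t. of_int (pre a $ i) * (of_int N * g (r a)))"
      by (simp add: sum_distrib_left mult_ac)
    also have "\<dots> = (\<Sum>a\<in>t. of_int (m a * pre a $ i))"
      by (auto intro!: sum.cong simp: m)
    finally have "(of_int (N * x$i) :: rat) = of_int (\<Sum>a\<in>t. m a * pre a $ i)" by simp
    then show "(N *s x)$i = (\<Sum>a\<in>t. m a *s pre a)$i" by (simp only: of_int_eq_iff) simp
  qed
  moreover have "(\<Sum>a\<in>t. m a *s pre a) \<in> zspan T"
    unfolding zspan_def by (intro Z.span_sum Z.span_scale) (use pre in \<open>auto simp: zspan_def\<close>)
  ultimately show ?thesis using N by auto
qed

lemma C_add: "a \<in> completion S \<Longrightarrow> b \<in> completion S \<Longrightarrow> a + b \<in> completion S"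
  by (simp add: completion_def cspan_def lat_add vec.span_add)

lemma C_smult: "a \<in> completion S \<Longrightarrow> k *s a \<in> completion S"
  by (simp add: completion_def cspan_def lat_smult vec.span_scale)

lemma C_div: assumes "N \<noteq> 0" "N *s y \<in> completion S" shows "y \<in> completion S"
proof -
  have "lat_to_C y = (1 / of_int N) *s lat_to_C (N *s y)" using assms(1)
    by (simp add: lat_smult vec_eq_iff)
  then show ?thesis using assms(2) by (simp add: completion_def cspan_def vec.span_scale)
qed

lemma C_mono: assumes "S \<subseteq> T" shows "completion (zspan S) \<subseteq> completion (zspan T)"
proof -
  interpret Z: module "(*s) :: int \<Rightarrow> int^'n \<Rightarrow> int^'n" by (rule int_module)
  have "zspan S \<subseteq> zspan T" unfolding zspan_def using assms by (rule Z.span_mono)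
  then show ?thesis unfolding completion_def cspan_def
    using vec.span_mono[of "lat_to_C ` zspan S" "lat_to_C ` zspan T"] by auto
qed

lemma zspan_C: "w \<in> zspan S \<Longrightarrow> w \<in> completion (zspan S)"
  by (simp add: completion_def cspan_def vec.span_base)

lemma zspan_Un: "zspan (A \<union> B) = {x + y | x y. x \<in> zspan A \<and> y \<in> zspan B}"
proof -
  interpret Z: module "(*s) :: int \<Rightarrow> int^'n \<Rightarrow> int^'n" by (rule int_module)
  show ?thesis unfolding zspan_def by (rule Z.span_Un)
qed

lemma ids2_exists:
  assumes "internal_direct_sum L {P1, P2} G" "P1 \<noteq> P2" "x \<in> L"
  shows "\<exists>a1 a2. a1 \<in> G P1 \<and> a2 \<in> G P2 \<and> x = a1 + a2"
proof -
  have "\<exists>!f. (\<forall>p\<in>{P1,P2}. f p \<in> G p) \<and> (\<forall>p. p \<notin> {P1,P2} \<longrightarrow> f p = 0) \<and> x = (\<Sum>p\<in>{P1,P2}. f p)"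
    using assms(1,3) unfolding internal_direct_sum_def by blast
  then obtain f where "(\<forall>p\<in>{P1,P2}. f p \<in> G p)" "x = (\<Sum>p\<in>{P1,P2}. f p)" by blast
  then show ?thesis using assms(2) by auto
qed

lemma ids2_unique:
  assumes "internal_direct_sum L {P1, P2} G" "P1 \<noteq> P2" "x \<in> L"
    "a1 \<in> G P1" "a2 \<in> G P2" "x = a1 + a2" "b1 \<in> G P1" "b2 \<in> G P2" "x = b1 + b2"
  shows "a1 = b1 \<and> a2 = b2"
proof -
  define fa where "fa p = (if p = P1 then a1 else if p = P2 then a2 else 0)" for p
  define fb where "fb p = (if p = P1 then b1 else if p = P2 then b2 else 0)" for p
  have u: "\<exists>!f. (\<forall>p\<in>{P1,P2}. f p \<in> G p) \<and> (\<forall>p. p \<notin> {P1,P2} \<longrightarrow> f p = 0) \<and> x = (\<Sum>p\<in>{P1,P2}. f p)"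
    using assms(1,3) unfolding internal_direct_sum_def by blast
  have Pa: "(\<forall>p\<in>{P1,P2}. fa p \<in> G p) \<and> (\<forall>p. p \<notin> {P1,P2} \<longrightarrow> fa p = 0) \<and> x = (\<Sum>p\<in>{P1,P2}. fa p)"
    using assms(2,4,5,6) by (simp add: fa_def)
  have Pb: "(\<forall>p\<in>{P1,P2}. fb p \<in> G p) \<and> (\<forall>p. p \<notin> {P1,P2} \<longrightarrow> fb p = 0) \<and> x = (\<Sum>p\<in>{P1,P2}. fb p)"
    using assms(2,7,8,9) by (simp add: fb_def)
  have "fa = fb" using u Pa Pb by blast
  then have "fa P1 = fb P1" "fa P2 = fb P2" by auto
  then show ?thesis using assms(2) by (simp add: fa_def fb_def)
qed

lemma ids2_intro:
  assumes "P1 \<noteq> P2"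
    "\<And>a1 a2. a1 \<in> G P1 \<Longrightarrow> a2 \<in> G P2 \<Longrightarrow> a1 + a2 \<in> L"
    "\<And>x. x \<in> L \<Longrightarrow> \<exists>a1 a2. a1 \<in> G P1 \<and> a2 \<in> G P2 \<and> x = a1 + a2"
    "\<And>x a1 a2 b1 b2. x \<in> L \<Longrightarrow> a1 \<in> G P1 \<Longrightarrow> a2 \<in> G P2 \<Longrightarrow> x = a1 + a2 \<Longrightarrow>
        b1 \<in> G P1 \<Longrightarrow> b2 \<in> G P2 \<Longrightarrow> x = b1 + b2 \<Longrightarrow> a1 = b1 \<and> a2 = b2"
  shows "internal_direct_sum L {P1, P2} G"
  unfolding internal_direct_sum_def
proof (intro conjI allI impI ballI)
  fix f assume "\<forall>p\<in>{P1, P2}. f p \<in> G p"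
  then have "f P1 \<in> G P1" "f P2 \<in> G P2" by auto
  then have "f P1 + f P2 \<in> L" by (rule assms(2))
  then show "(\<Sum>p\<in>{P1, P2}. f p) \<in> L" using assms(1) by simp
next
  fix x assume x: "x \<in> L"
  obtain a1 a2 where a: "a1 \<in> G P1" "a2 \<in> G P2" "x = a1 + a2" using assms(3)[OF x] by blast
  define fa where "fa p = (if p = P1 then a1 else if p = P2 then a2 else 0)" for p
  show "\<exists>!f. (\<forall>p\<in>{P1, P2}. f p \<in> G p) \<and> (\<forall>p. p \<notin> {P1, P2} \<longrightarrow> f p = 0) \<and> x = (\<Sum>p\<in>{P1, P2}. f p)"
  proof (rule ex1I[of _ fa])
    show "(\<forall>p\<in>{P1, P2}. fa p \<in> G p) \<and> (\<forall>p. p \<notin> {P1, P2} \<longrightarrow> fa p = 0) \<and> x = (\<Sum>p\<in>{P1, P2}. fa p)"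
      using a assms(1) by (simp add: fa_def)
  next
    fix f assume f: "(\<forall>p\<in>{P1, P2}. f p \<in> G p) \<and> (\<forall>p. p \<notin> {P1, P2} \<longrightarrow> f p = 0) \<and> x = (\<Sum>p\<in>{P1, P2}. f p)"
    then have f1: "f P1 \<in> G P1" "f P2 \<in> G P2" "x = f P1 + f P2" using assms(1) by auto
    have "f P1 = a1 \<and> f P2 = a2"
      by (rule assms(4)[OF x f1(1) f1(2) f1(3) a(1) a(2) a(3)])
    then show "f = fa" using f unfolding fa_def by (intro ext) auto
  qed
qed

theorem lemma3p3:
  fixes B B1 B2 D :: "(int ^ 'n) set"
  assumes "finite B"
    and "integral_decomposition B {B1, B2}"
    and "D \<subseteq> B"
    and "irreducible_set D"
  shows "D \<subseteq> B1 \<or> D \<subseteq> B2"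
proof (rule ccontr)
  assume nd: "\<not> (D \<subseteq> B1 \<or> D \<subseteq> B2)"
  have part: "is_partition B {B1, B2}" and
    idsB: "internal_direct_sum (completion (zspan B)) {B1, B2} (\<lambda>p. completion (zspan p))"
    using assms(2) unfolding integral_decomposition_def by auto
  have BU: "B = B1 \<union> B2" using part unfolding is_partition_def by auto
  have B12: "B1 \<noteq> B2" using nd assms(3) BU by auto
  then have dis: "B1 \<inter> B2 = {}" using part unfolding is_partition_def by auto
  define D1 where "D1 = D \<inter> B1"
  define D2 where "D2 = D \<inter> B2"
  have DU: "D = D1 \<union> D2" using assms(3) BU by (auto simp: D1_def D2_def)
  have ne: "D1 \<noteq> {}" "D2 \<noteq> {}" using nd assms(3) BU by (auto simp: D1_def D2_def)
  have D12: "D1 \<noteq> D2" using ne dis by (auto simp: D1_def D2_def)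
  have sub: "D1 \<subseteq> B1" "D2 \<subseteq> B2" "D1 \<subseteq> D" "D2 \<subseteq> D" "D \<subseteq> B" using assms(3) by (auto simp: D1_def D2_def)
  let ?C = "\<lambda>p. completion (zspan p)"
  have ids: "internal_direct_sum (?C D) {D1, D2} ?C"
  proof (rule ids2_intro[OF D12])
    fix a1 a2 assume "a1 \<in> ?C D1" "a2 \<in> ?C D2"
    then show "a1 + a2 \<in> ?C D" using C_mono[OF sub(3)] C_mono[OF sub(4)] C_add by blast
  next
    fix x assume x: "x \<in> ?C D"
    then have xB: "x \<in> ?C B" using C_mono[OF sub(5)] by blast
    obtain y1 y2 where y: "y1 \<in> ?C B1" "y2 \<in> ?C B2" "x = y1 + y2"
      using ids2_exists[OF idsB B12 xB] by blast
    obtain N :: int where N: "N > 0" "N *s x \<in> zspan D"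
      using R[of x D] x unfolding completion_def by blast
    have "N *s x \<in> zspan (D1 \<union> D2)" using N(2) DU by simp
    then obtain w1 w2 where w: "w1 \<in> zspan D1" "w2 \<in> zspan D2" "N *s x = w1 + w2"
      unfolding zspan_Un by blast
    have "N *s y1 = w1 \<and> N *s y2 = w2"
    proof (rule ids2_unique[OF idsB B12])
      show "N *s x \<in> ?C B" using xB C_smult by blast
      show "N *s y1 \<in> ?C B1" "N *s y2 \<in> ?C B2" using y C_smult by blast+
      show "N *s x = N *s y1 + N *s y2" using y by (simp add: vector_add_ldistrib)
      show "w1 \<in> ?C B1" "w2 \<in> ?C B2" using w zspan_C C_mono[OF sub(1)] C_mono[OF sub(2)] by blast+
      show "N *s x = w1 + w2" by (rule w(3))
    qed
    then have "N *s y1 \<in> ?C D1" "N *s y2 \<in> ?C D2" using w zspan_C by auto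
    then have "y1 \<in> ?C D1" "y2 \<in> ?C D2" using C_div[of N] N(1) by auto
    then show "\<exists>a1 a2. a1 \<in> ?C D1 \<and> a2 \<in> ?C D2 \<and> x = a1 + a2" using y by blast
  next
    fix x a1 a2 b1 b2 assume h: "x \<in> ?C D" "a1 \<in> ?C D1" "a2 \<in> ?C D2" "x = a1 + a2"
      "b1 \<in> ?C D1" "b2 \<in> ?C D2" "x = b1 + b2"
    have "x \<in> ?C B" "a1 \<in> ?C B1" "a2 \<in> ?C B2" "b1 \<in> ?C B1" "b2 \<in> ?C B2"
      using h C_mono[OF sub(1)] C_mono[OF sub(2)] C_mono[OF sub(5)] by blast+
    then show "a1 = b1 \<and> a2 = b2"
      using ids2_unique[OF idsB B12, of x a1 a2 b1 b2] h by blast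
  qed
  have "is_partition D {D1, D2}" using DU ne D12 dis unfolding is_partition_def D1_def D2_def by auto
  then have "integral_decomposition D {D1, D2}" using ids unfolding integral_decomposition_def by simp
  moreover have "card {D1, D2} \<ge> 2" using D12 by simp
  ultimately show False using assms(4) unfolding irreducible_set_def by blast
qed

end
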